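(* Let $L$ be a binary $\mathbb{Z}_2$-lattice such that $\mathfrak{s}L = \mathbb{Z}_2$ and $\mathbb{Q}_2L$ is a hyperbolic plane. Let $s$ and $t$ be integers such that $t > 2s = \operatorname{ord}_2 dL$. Let $z$ be a primitive vector in $L$ with $\operatorname{ord}_2 Q(z) = t+1$, and let $w\in L$ satisfy $\operatorname{ord}_2 B(z,w) = t$. Then $\operatorname{ord}_2 Q(w)\ge t+2$.
   Context: A $\mathbb{Z}_2$-lattice is a finitely generated $\mathbb{Z}_2$-submodule of a quadratic space $(V,B)$ over $\mathbb{Q}_2$ with $Q(v)=B(v,v)$, assumed integral and nondegenerate. $\mathfrak{s}L=B(L,L)$ is the scale, $\mathbb{Q}_2L$ the space spanned by $L$, and $dL$ the determinant of a Gram matrix of $L$ (well defined up to unit squares). A vector $z$ is primitive if $\mathbb{Z}_2z$ is a direct summand of $L$. $\operatorname{ord}_2$ is the $2$-adic valuation (with $\operatorname{ord}_2 0=\infty$). *)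

theory Defs
  imports Main "HOL-Library.Extended_Nat"
begin

text \<open>An element of Z_2 is represented by the coherent sequence of its residues
  x mod 2^n, n = 0,1,2,... (the inverse limit of Z/2^nZ).\<close>

typedef z2 = "{f :: nat \<Rightarrow> int. \<forall>n. 0 \<le> f n \<and> f n < 2^n \<and> f (Suc n) mod 2^n = f n}"
  by (rule exI[of _ "\<lambda>_. 0"]) simp

lemma z2_coh_aux:
  fixes f g :: "nat \<Rightarrow> int"
  assumes "\<forall>n. f (Suc n) mod 2^n = f n" "\<forall>n. g (Suc n) mod 2^n = g n"
  shows "((f (Suc n) + g (Suc n)) mod 2^Suc n) mod 2^n = (f n + g n) mod 2^n"
    and "((f (Suc n) - g (Suc n)) mod 2^Suc n) mod 2^n = (f n - g n) mod 2^n"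
    and "((f (Suc n) * g (Suc n)) mod 2^Suc n) mod 2^n = (f n * g n) mod 2^n"
proof -
  have d: "(2::int)^n dvd 2^Suc n" by simp
  show "((f (Suc n) + g (Suc n)) mod 2^Suc n) mod 2^n = (f n + g n) mod 2^n"
    using assms by (simp only: mod_mod_cancel[OF d]) (metis mod_add_eq)
  show "((f (Suc n) - g (Suc n)) mod 2^Suc n) mod 2^n = (f n - g n) mod 2^n"
    using assms by (simp only: mod_mod_cancel[OF d]) (metis mod_diff_eq)
  show "((f (Suc n) * g (Suc n)) mod 2^Suc n) mod 2^n = (f n * g n) mod 2^n"
    using assms by (simp only: mod_mod_cancel[OF d]) (metis mod_mult_eq)
qed

setup_lifting type_definition_z2

lift_definition z2_zero :: z2 is "\<lambda>_. 0" by simp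

lift_definition z2_add :: "z2 \<Rightarrow> z2 \<Rightarrow> z2" (infixl "\<oplus>" 65)
  is "\<lambda>f g n. (f n + g n) mod 2^n"
  using z2_coh_aux(1) by simp

lift_definition z2_sub :: "z2 \<Rightarrow> z2 \<Rightarrow> z2" (infixl "\<ominus>" 65)
  is "\<lambda>f g n. (f n - g n) mod 2^n"
  using z2_coh_aux(2) by simp

lift_definition z2_mult :: "z2 \<Rightarrow> z2 \<Rightarrow> z2" (infixl "\<otimes>" 70)
  is "\<lambda>f g n. (f n * g n) mod 2^n"
  using z2_coh_aux(3) by simp

text \<open>2-adic valuation: ord2 x = k iff x \<equiv> 0 mod 2^k but not mod 2^(k+1); ord2 0 = \<infinity>.\<close>
lift_definition ord2 :: "z2 \<Rightarrow> enat"
  is "\<lambda>f. if (\<forall>n. f n = 0) then \<infinity> else enat (LEAST n. f (Suc n) \<noteq> 0)" .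

text \<open>A binary Z_2-lattice L is free of rank 2; we identify L with Z_2 \<times> Z_2 via a basis
  e1, e2, with Gram matrix [[a, b], [b, c]], i.e. B(e1,e1) = a, B(e1,e2) = b, B(e2,e2) = c.\<close>

definition bil :: "z2 \<Rightarrow> z2 \<Rightarrow> z2 \<Rightarrow> z2 \<times> z2 \<Rightarrow> z2 \<times> z2 \<Rightarrow> z2" where
  "bil a b c u v =
     a \<otimes> fst u \<otimes> fst v \<oplus> b \<otimes> (fst u \<otimes> snd v \<oplus> snd u \<otimes> fst v) \<oplus> c \<otimes> snd u \<otimes> snd v"

definition quadf :: "z2 \<Rightarrow> z2 \<Rightarrow> z2 \<Rightarrow> z2 \<times> z2 \<Rightarrow> z2" where
  "quadf a b c v = bil a b c v v"

definition gram_det :: "z2 \<Rightarrow> z2 \<Rightarrow> z2 \<Rightarrow> z2" where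
  "gram_det a b c = a \<otimes> c \<ominus> b \<otimes> b"

text \<open>sL = B(L,L) = Z_2 : some value B(x,y) is a unit (B is integral by construction).\<close>
definition scale_is_Z2 :: "z2 \<Rightarrow> z2 \<Rightarrow> z2 \<Rightarrow> bool" where
  "scale_is_Z2 a b c \<longleftrightarrow> (\<exists>x y. ord2 (bil a b c x y) = 0)"

text \<open>Q_2 L is a hyperbolic plane: the binary space is nondegenerate and isotropic.
  A nonzero isotropic vector of Q_2 L may be scaled into L, so we quantify over L.\<close>
definition hyperbolic_plane :: "z2 \<Rightarrow> z2 \<Rightarrow> z2 \<Rightarrow> bool" where
  "hyperbolic_plane a b c \<longleftrightarrow> gram_det a b c \<noteq> z2_zero \<and>
     (\<exists>v. v \<noteq> (z2_zero, z2_zero) \<and> quadf a b c v = z2_zero)"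

text \<open>z primitive: Z_2 z is a direct summand of L = Z_2^2, i.e. z extends to a basis (z, y).\<close>
definition primitive :: "z2 \<times> z2 \<Rightarrow> bool" where
  "primitive z \<longleftrightarrow> (\<exists>y. ord2 (fst z \<otimes> snd y \<ominus> snd z \<otimes> fst y) = 0)"

end

theory Submission
  imports Defs
begin

lemma R_lo: "0 \<le> Rep_z2 x n" using Rep_z2[of x] by auto
lemma R_hi: "Rep_z2 x n < 2^n" using Rep_z2[of x] by auto
lemma R_coh: "Rep_z2 x (Suc n) mod 2^n = Rep_z2 x n" using Rep_z2[of x] by auto
lemma R_mod[simp]: "Rep_z2 x n mod 2^n = Rep_z2 x n"
  using R_lo R_hi by (simp add: mod_pos_pos_trivial)
lemma R0[simp]: "Rep_z2 x 0 = 0" using R_lo[of x 0] R_hi[of x 0] by simp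
lemma R_eq: "x = y \<longleftrightarrow> (\<forall>n. Rep_z2 x n = Rep_z2 y n)"
  by (metis Rep_z2_inject ext)

lift_definition z2_one :: z2 is "\<lambda>n. 1 mod 2^n"
proof -
  fix n :: nat
  have d: "(2::int)^n dvd 2^Suc n" by simp
  show "0 \<le> (1::int) mod 2 ^ n \<and> 1 mod 2 ^ n < (2::int) ^ n \<and> 1 mod 2 ^ Suc n mod 2 ^ n = (1::int) mod 2 ^ n"
    using mod_mod_cancel[OF d, of 1] by simp
qed

instantiation z2 :: comm_ring_1
begin
definition "zero_z2 = z2_zero"
definition "one_z2 = z2_one"
definition "plus_z2 = z2_add"
definition "minus_z2 = z2_sub"
definition "times_z2 = z2_mult"
definition "uminus_z2 x = z2_sub z2_zero x"

lemma Rz[simp]: "Rep_z2 0 n = 0" by (simp add: zero_z2_def z2_zero.rep_eq)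
lemma R1[simp]: "Rep_z2 1 n = 1 mod 2^n" by (simp add: one_z2_def z2_one.rep_eq)
lemma Radd[simp]: "Rep_z2 (x + y) n = (Rep_z2 x n + Rep_z2 y n) mod 2^n"
  by (simp add: plus_z2_def z2_add.rep_eq)
lemma Rsub[simp]: "Rep_z2 (x - y) n = (Rep_z2 x n - Rep_z2 y n) mod 2^n"
  by (simp add: minus_z2_def z2_sub.rep_eq)
lemma Rmul[simp]: "Rep_z2 (x * y) n = (Rep_z2 x n * Rep_z2 y n) mod 2^n"
  by (simp add: times_z2_def z2_mult.rep_eq)
lemma Rneg[simp]: "Rep_z2 (- x) n = (- Rep_z2 x n) mod 2^n"
  by (simp add: uminus_z2_def z2_sub.rep_eq z2_zero.rep_eq)

instance
proof
  fix a b c :: z2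
  show "a + b + c = a + (b + c)" by (simp add: R_eq mod_add_left_eq mod_add_right_eq add.assoc)
  show "a + b = b + a" by (simp add: R_eq add.commute)
  show "0 + a = a" by (simp add: R_eq)
  show "- a + a = 0" by (simp add: R_eq mod_add_left_eq)
  show "a - b = a + - b" by (simp add: R_eq mod_add_right_eq)
  show "a * b * c = a * (b * c)" by (simp add: R_eq mod_mult_left_eq mod_mult_right_eq mult.assoc)
  show "a * b = b * a" by (simp add: R_eq mult.commute)
  show "1 * a = a" by (simp add: R_eq mod_mult_left_eq)
  show "(a + b) * c = a * c + b * c" by (simp add: R_eq mod_mult_left_eq mod_add_eq distrib_right)
  show "(0::z2) \<noteq> 1"
  proof
    assume "(0::z2) = 1"
    then have "Rep_z2 (0::z2) 1 = Rep_z2 1 1" by simp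
    then show False by simp
  qed
qed
end

lemma Rcoh_le: "m \<le> N \<Longrightarrow> Rep_z2 x N mod 2^m = Rep_z2 x m"
proof (induction N)
  case 0 then show ?case by simp
next
  case (Suc N)
  show ?case
  proof (cases "m = Suc N")
    case False
    then have "m \<le> N" using Suc by simp
    have d: "(2::int)^m dvd 2^N" using \<open>m \<le> N\<close> by (simp add: le_imp_power_dvd)
    have "Rep_z2 x (Suc N) mod 2^m = (Rep_z2 x (Suc N) mod 2^N) mod 2^m" by (simp add: mod_mod_cancel[OF d])
    then show ?thesis using R_coh Suc.IH \<open>m \<le> N\<close> by simp
  qed (metis R_mod)
qed

lemma R2pow: "Rep_z2 ((2::z2)^k) n = 2^k mod 2^n"
proof (induction k)
  case 0 then show ?case by simp
next
  case (Suc k)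
  have "Rep_z2 (2::z2) n = 2 mod 2^n"
    by (metis R1 Radd mod_add_eq one_add_one)
  then show ?case using Suc by (simp add: mod_mult_eq)
qed

definition dv :: "nat \<Rightarrow> z2 \<Rightarrow> bool" where "dv n x \<longleftrightarrow> (\<exists>c. x = 2^n * c)"

lemma dv_R1: "dv n x \<Longrightarrow> Rep_z2 x n = 0"
  unfolding dv_def by (auto simp: R2pow)

lemma dv_R2:
  assumes "Rep_z2 x n = 0" shows "dv n x"
proof -
  define X where "X m = Rep_z2 x (m + n)" for m
  define q where "q m = X m div 2^n" for m
  have Xd: "X m = 2^n * q m" for m
  proof -
    have "X m mod 2^n = 0" unfolding X_def using Rcoh_le[of n "m+n" x] assms by (metis le_add2)
    then show ?thesis unfolding q_def by (metis mult_div_mod_eq add_0_right)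
  qed
  have mem: "q \<in> {f. \<forall>m. 0 \<le> f m \<and> f m < 2^m \<and> f (Suc m) mod 2^m = f m}"
  proof (intro CollectI allI conjI)
    fix m
    have "0 \<le> X m" "X m < 2^m * 2^n" unfolding X_def using R_lo R_hi[of x "m+n"] by (auto simp: power_add)
    then have "0 \<le> 2^n * q m" "2^n * q m < 2^n * 2^m" unfolding Xd by (simp_all add: mult.commute)
    then show "0 \<le> q m" "q m < 2 ^ m"
      by (simp_all add: zero_le_mult_iff)
  next
    fix m
    have "X m = X (Suc m) mod 2^(m+n)" unfolding X_def using R_coh[of x "m+n"] by simp
    also have "\<dots> = (2^n * q (Suc m)) mod (2^n * 2^m)" unfolding Xd
      by (metis power_add mult.commute)
    also have "\<dots> = 2^n * (q (Suc m) mod 2^m)" by (rule mult_mod_right[symmetric])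
    finally have "2^n * q m = 2^n * (q (Suc m) mod 2^m)" unfolding Xd .
    then show "q (Suc m) mod 2 ^ m = q m" by simp
  qed
  define c where "c = Abs_z2 q"
  have Rc: "Rep_z2 c m = q m" for m unfolding c_def using Abs_z2_inverse[OF mem] by simp
  have "x = 2^n * c"
  proof (subst R_eq, intro allI)
    fix m
    have "Rep_z2 (2^n * c) m = (2^n mod 2^m * q m) mod 2^m" by (simp add: R2pow Rc)
    also have "\<dots> = X m mod 2^m" unfolding Xd by (metis mod_mult_left_eq)
    also have "\<dots> = Rep_z2 x m" unfolding X_def by (simp add: Rcoh_le)
    finally show "Rep_z2 x m = Rep_z2 (2^n * c) m" by simp
  qed
  then show ?thesis unfolding dv_def by blast
qed

lemma dv_R: "dv n x \<longleftrightarrow> Rep_z2 x n = 0" using dv_R1 dv_R2 by blast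

lemma ord2_ge: "enat n \<le> ord2 x \<longleftrightarrow> dv n x"
proof (cases "\<forall>m. Rep_z2 x m = 0")
  case True
  then show ?thesis by (simp add: ord2.rep_eq dv_R)
next
  case False
  define L where "L = (LEAST m. Rep_z2 x (Suc m) \<noteq> 0)"
  have o: "ord2 x = enat L" using False by (simp add: ord2.rep_eq L_def)
  have LI: "Rep_z2 x (Suc L) \<noteq> 0"
  proof -
    obtain m where "Rep_z2 x m \<noteq> 0" using False by blast
    then have "m \<noteq> 0" by (metis R0)
    then obtain j where "m = Suc j" by (cases m) auto
    then show ?thesis unfolding L_def by (metis (mono_tags, lifting) LeastI \<open>Rep_z2 x m \<noteq> 0\<close>)
  qed
  have Lz: "j < L \<Longrightarrow> Rep_z2 x (Suc j) = 0" for j unfolding L_def using not_less_Least by blast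
  show ?thesis
  proof
    assume "enat n \<le> ord2 x"
    then have "n \<le> L" using o by simp
    then show "dv n x" unfolding dv_R using Lz by (cases n) auto
  next
    assume "dv n x"
    then have z: "Rep_z2 x n = 0" by (simp add: dv_R)
    show "enat n \<le> ord2 x"
    proof (rule ccontr)
      assume "\<not> enat n \<le> ord2 x"
      then have "Suc L \<le> n" using o by simp
      then have "Rep_z2 x (Suc L) = 0" using Rcoh_le[of "Suc L" n x] z by simp
      then show False using LI by simp
    qed
  qed
qed

lemma ord2_inf: "ord2 x = \<infinity> \<longleftrightarrow> x = 0"
  by (simp add: ord2.rep_eq R_eq)


definition ex :: "nat \<Rightarrow> z2 \<Rightarrow> bool" where "ex k x \<longleftrightarrow> dv k x \<and> \<not> dv (k+1) x"

lemma ord2_enat: "ord2 x = enat k \<longleftrightarrow> ex k x"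
  unfolding ex_def ord2_ge[symmetric]
  by (cases "ord2 x") auto

lemma dv_mono: "n \<le> m \<Longrightarrow> dv m x \<Longrightarrow> dv n x"
  unfolding dv_def
proof (elim exE)
  fix c assume "n \<le> m" "x = 2^m * c"
  then have "x = 2^n * (2^(m-n) * c)" by (metis le_add_diff_inverse mult.assoc power_add)
  then show "\<exists>c. x = 2^n * c" by blast
qed

lemma dv_add: "dv n x \<Longrightarrow> dv n y \<Longrightarrow> dv n (x + y)"
  unfolding dv_def by (metis distrib_left)
lemma dv_neg: "dv n x \<Longrightarrow> dv n (- x)"
  unfolding dv_def by (metis mult_minus_right)
lemma dv_diff: "dv n x \<Longrightarrow> dv n y \<Longrightarrow> dv n (x - y)"
  using dv_add dv_neg by (metis diff_conv_add_uminus)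
lemma dv_multR: "dv n x \<Longrightarrow> dv n (x * y)"
  unfolding dv_def by (metis mult.assoc)
lemma dv_multL: "dv n x \<Longrightarrow> dv n (y * x)"
  using dv_multR by (metis mult.commute)
lemma dv_mult2: "dv n x \<Longrightarrow> dv m y \<Longrightarrow> dv (n+m) (x * y)"
  unfolding dv_def
proof (elim exE)
  fix c d assume "x = 2^n * c" "y = 2^m * d"
  then have "x * y = 2^(n+m) * (c * d)" by (simp add: power_add mult_ac)
  then show "\<exists>c. x * y = 2^(n+m) * c" by blast
qed
lemma dv_zero: "dv n 0" unfolding dv_def by (metis mult_zero_right)
lemma dv_2k: "dv k (2^k * u)" unfolding dv_def by blast

lemma dv_pow_mul: "dv (k+1) (2^k * u) \<longleftrightarrow> dv 1 u"
proof -
  have "Rep_z2 (2^k * u) (k+1) = (2^k * Rep_z2 u (k+1)) mod (2^k * 2)"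
    by (simp add: R2pow mod_mult_left_eq)
  also have "\<dots> = 2^k * (Rep_z2 u (k+1) mod 2)" by (rule mult_mod_right[symmetric])
  also have "Rep_z2 u (k+1) mod 2 = Rep_z2 u 1" using Rcoh_le[of 1 "k+1" u] by simp
  finally show ?thesis unfolding dv_R by simp
qed

lemma parity: "dv 1 u \<or> (\<exists>a. u = 1 + 2 * a)"
proof (cases "Rep_z2 u 1 = 0")
  case True then show ?thesis by (simp add: dv_R)
next
  case False
  then have "Rep_z2 u 1 = 1" using R_lo[of u 1] R_hi[of u 1] by simp
  then have "Rep_z2 (u - 1) 1 = 0" by simp
  then have "dv 1 (u - 1)" by (simp add: dv_R)
  then obtain a where "u - 1 = 2^1 * a" unfolding dv_def by blast
  then have "u = 1 + 2 * a" by (simp add: algebra_simps)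
  then show ?thesis by blast
qed

lemma not_dv1: "\<not> dv 1 (1 + 2 * a)"
proof
  assume "dv 1 (1 + 2 * a)"
  moreover have "dv 1 (2 * a)" unfolding dv_def by auto
  ultimately have "dv 1 ((1 + 2*a) - 2*a)" by (rule dv_diff)
  then have "Rep_z2 (1::z2) 1 = 0" by (simp add: dv_R)
  then show False by simp
qed

lemma ex_intro: "ex k (2^k * (1 + 2 * a))"
  unfolding ex_def using dv_2k dv_pow_mul not_dv1 by blast

lemma ex_decomp: "ex k x \<Longrightarrow> \<exists>a. x = 2^k * (1 + 2 * a)"
proof -
  assume e: "ex k x"
  then obtain u where u: "x = 2^k * u" unfolding ex_def dv_def by blast
  then have "\<not> dv 1 u" using e dv_pow_mul unfolding ex_def by blast
  then show ?thesis using parity u by blast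
qed

lemma ex_mult: "ex k x \<Longrightarrow> ex l y \<Longrightarrow> ex (k+l) (x * y)"
proof -
  assume "ex k x" "ex l y"
  then obtain a b where "x = 2^k * (1 + 2*a)" "y = 2^l * (1 + 2*b)" using ex_decomp by blast
  then have "x * y = 2^(k+l) * (1 + 2 * (a + b + 2*a*b))" by (simp add: power_add algebra_simps)
  then show ?thesis using ex_intro by metis
qed

lemma ex_add: "ex k x \<Longrightarrow> dv (k+1) y \<Longrightarrow> ex k (x + y)"
proof -
  assume "ex k x" "dv (k+1) y"
  then obtain a c where "x = 2^k * (1 + 2*a)" "y = 2^(k+1) * c" using ex_decomp unfolding dv_def by blast
  then have "x + y = 2^k * (1 + 2 * (a + c))" by (simp add: algebra_simps)
  then show ?thesis using ex_intro by metis
qed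

lemma ex_neg: "ex k x \<Longrightarrow> ex k (- x)"
proof -
  assume "ex k x"
  then obtain a where "x = 2^k * (1 + 2*a)" using ex_decomp by blast
  then have "- x = 2^k * (1 + 2 * (-1 - a))" by (simp add: algebra_simps)
  then show ?thesis using ex_intro by metis
qed

lemma ex_diff: "ex k x \<Longrightarrow> dv (k+1) y \<Longrightarrow> ex k (x - y)"
  using ex_add dv_neg by (metis diff_conv_add_uminus)

lemma ex_le: "ex k x \<Longrightarrow> dv n x \<Longrightarrow> n \<le> k"
  unfolding ex_def using dv_mono[of "k+1" n x] by linarith

lemma ex_unique: "ex k x \<Longrightarrow> ex l x \<Longrightarrow> k = l"
  using ex_le unfolding ex_def by (meson le_antisym)

lemma ex_nz: "ex k x \<Longrightarrow> x \<noteq> 0"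
  unfolding ex_def using dv_zero by blast

lemma nz_ex: "x \<noteq> 0 \<Longrightarrow> \<exists>k. ex k x"
  using ord2_inf ord2_enat by (cases "ord2 x") auto

lemma pronic: "\<exists>e. a * a + a = 2 * (e::z2)"
proof (cases "dv 1 a")
  case True
  then obtain c where "a = 2^1 * c" unfolding dv_def by blast
  then have "a * a + a = 2 * (2*c*c + c)" by (simp add: algebra_simps)
  then show ?thesis by blast
next
  case False
  then obtain c where "a = 1 + 2 * c" using parity by blast
  then have "a * a + a = 2 * ((1 + 2*c) * (1 + c))" by (simp add: algebra_simps)
  then show ?thesis by blast
qed

lemma ex_sq_diff: "ex k x \<Longrightarrow> ex k y \<Longrightarrow> dv (2*k+3) (x*x - y*y)"
proof -
  assume "ex k x" "ex k y"
  then obtain a b where x: "x = 2^k * (1 + 2*a)" and y: "y = 2^k * (1 + 2*b)" using ex_decomp by blast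
  obtain e f where e: "a * a + a = 2 * e" and f: "b * b + b = 2 * f" using pronic by blast
  have "x*x - y*y = 2^k * 2^k * 4 * ((a*a + a) - (b*b + b))" unfolding x y by (simp add: algebra_simps)
  also have "\<dots> = 2^k * 2^k * 8 * (e - f)" unfolding e f by (simp add: algebra_simps)
  also have "(2::z2)^k * 2^k * 8 = 2^(2*k+3)" by (simp only: mult_2 power_add) simp

  finally show ?thesis unfolding dv_def by blast
qed


lemma ops: "x \<oplus> y = x + y" "x \<otimes> y = x * y" "x \<ominus> y = x - y" "z2_zero = 0"
  by (simp_all add: plus_z2_def times_z2_def minus_z2_def zero_z2_def)

definition det2 :: "z2 \<times> z2 \<Rightarrow> z2 \<times> z2 \<Rightarrow> z2" where
  "det2 u v = fst u * snd v - snd u * fst v"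

lemma bil_eq: "bil a b c u v = a * fst u * fst v + b * (fst u * snd v + snd u * fst v) + c * snd u * snd v"
  by (simp add: bil_def ops)

lemma idI: "quadf a b c u * quadf a b c v - bil a b c u v * bil a b c u v = det2 u v * det2 u v * gram_det a b c"
  unfolding quadf_def bil_eq det2_def gram_det_def ops by (simp add: algebra_simps)

lemma cramer: "det2 z y * bil a b c z w = det2 w y * quadf a b c z + det2 z w * bil a b c z y"
  unfolding quadf_def bil_eq det2_def by (simp add: algebra_simps)

theorem lemma6p4:
  fixes a b c :: z2 and s t :: nat and z w :: "z2 \<times> z2"
  assumes "scale_is_Z2 a b c"
    and "hyperbolic_plane a b c"
    and "t > 2 * s"
    and "ord2 (gram_det a b c) = enat (2 * s)"
    and "primitive z"
    and "ord2 (quadf a b c z) = enat (t + 1)"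
    and "ord2 (bil a b c z w) = enat t"
  shows "ord2 (quadf a b c w) \<ge> enat (t + 2)"
proof -
  let ?B = "bil a b c" and ?Q = "quadf a b c" and ?d = "gram_det a b c"
  have ed: "ex (2*s) ?d" using assms(4) by (simp add: ord2_enat)
  have eQz: "ex (t+1) (?Q z)" using assms(6) by (simp add: ord2_enat)
  have eBzw: "ex t (?B z w)" using assms(7) by (simp add: ord2_enat)
  obtain y where ed0: "ex 0 (det2 z y)" using assms(5) unfolding primitive_def ops det2_def by (auto simp: ord2_enat zero_enat_def)
  have e1: "ex (2*s) (det2 z y * det2 z y * ?d)" using ex_mult[OF ex_mult[OF ed0 ed0] ed] by simp
  have "dv (t+1) (?Q z * ?Q y)" using eQz dv_multR unfolding ex_def by blast
  then have d1: "dv (2*s+1) (?Q z * ?Q y)" using dv_mono assms(3) by (metis Suc_eq_plus1 Suc_le_mono less_imp_le_nat not_less_eq_eq)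
  have "?B z y * ?B z y = - (det2 z y * det2 z y * ?d) + ?Q z * ?Q y" using idI[of a b c z y] by (simp add: algebra_simps)
  then have e2: "ex (2*s) (?B z y * ?B z y)" using ex_add[OF ex_neg[OF e1] d1] by simp
  then have "?B z y \<noteq> 0" using ex_nz by fastforce
  then obtain sg where esg: "ex sg (?B z y)" using nz_ex by blast
  have "sg = s" using ex_unique[OF ex_mult[OF esg esg] e2] by simp
  then have eBzy: "ex s (?B z y)" using esg by simp
  have e3: "ex t (det2 z y * ?B z w)" using ex_mult[OF ed0 eBzw] by simp
  have d3: "dv (t+1) (det2 w y * ?Q z)" using eQz dv_multL unfolding ex_def by blast
  have e4: "ex t (det2 z w * ?B z y)" using ex_diff[OF e3 d3] cramer[of z y a b c w] by (simp add: algebra_simps)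
  then have "det2 z w \<noteq> 0" using ex_nz by fastforce
  then obtain l where el: "ex l (det2 z w)" using nz_ex by blast
  have lst: "l + s = t" using ex_unique[OF ex_mult[OF el eBzy] e4] .
  \<comment> \<open>step 4: -dL is a square\<close>
  obtain v where v: "v \<noteq> (0, 0)" "?Q v = 0" using assms(2) unfolding hyperbolic_plane_def ops by blast
  obtain x where mx: "det2 v x \<noteq> 0"
  proof (cases "snd v = 0")
    case True
    then have "fst v \<noteq> 0" using v(1) by (cases v) auto
    then show ?thesis using that[of "(0,1)"] True by (simp add: det2_def)
  next
    case False
    then show ?thesis using that[of "(1,0)"] by (simp add: det2_def)
  qed
  obtain mu where emu: "ex mu (det2 v x)" using nz_ex mx by blast
  have nn: "?B v x * ?B v x = - (det2 v x * det2 v x * ?d)" using idI[of a b c v x] v(2) by (simp add: algebra_simps) (metis minus_equation_iff)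
  have e5: "ex (mu + mu + 2*s) (?B v x * ?B v x)" unfolding nn using ex_neg[OF ex_mult[OF ex_mult[OF emu emu] ed]] .
  then have "?B v x \<noteq> 0" using ex_nz by fastforce
  then obtain nu where enu: "ex nu (?B v x)" using nz_ex by blast
  have "nu + nu = mu + mu + 2*s" using ex_unique[OF ex_mult[OF enu enu] e5] .
  then have nus: "nu = mu + s" by simp
  have qz: "?Q z * ?Q w = ?B z w * ?B z w + det2 z w * det2 z w * ?d" using idI[of a b c z w] by (simp add: algebra_simps)
  have key: "det2 v x * det2 v x * (?Q z * ?Q w) = (det2 v x * ?B z w) * (det2 v x * ?B z w) - (det2 z w * ?B v x) * (det2 z w * ?B v x)"
  proof -
    have "det2 v x * det2 v x * (?Q z * ?Q w) = (det2 v x * ?B z w) * (det2 v x * ?B z w) + (det2 z w * det2 z w) * (det2 v x * det2 v x * ?d)"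
      unfolding qz by (simp add: algebra_simps)
    also have "\<dots> = (det2 v x * ?B z w) * (det2 v x * ?B z w) - (det2 z w * ?B v x) * (det2 z w * ?B v x)"
      using nn by (simp add: algebra_simps)
    finally show ?thesis .
  qed
  have e6: "ex (mu + t) (det2 v x * ?B z w)" using ex_mult[OF emu eBzw] .
  have e7: "ex (mu + t) (det2 z w * ?B v x)" using ex_mult[OF el enu] lst nus by (metis add.assoc add.commute)
  have d8: "dv (2*(mu+t)+3) (det2 v x * det2 v x * (?Q z * ?Q w))" unfolding key using ex_sq_diff[OF e6 e7] .
  show ?thesis
  proof (cases "?Q w = 0")
    case True then show ?thesis by (simp add: ord2_inf[THEN iffD2])
  next
    case False
    then obtain r where er: "ex r (?Q w)" using nz_ex by blast
    have "ex (mu + mu + ((t+1) + r)) (det2 v x * det2 v x * (?Q z * ?Q w))"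
      using ex_mult[OF ex_mult[OF emu emu] ex_mult[OF eQz er]] .
    from ex_le[OF this d8] have "t + 2 \<le> r" by simp
    then show ?thesis using er by (simp add: ord2_enat[symmetric])
  qed
qed

end
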